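(* Let $q=2^m$ with $m\ge 4$ even. Then the subfield subcode $\mathcal C_{\{3,5\}}^{\perp}|_{\mathrm{GF}(q)}$ has parameters $[q+1,q-3,4]_q$.
   Context: Let $U_{q+1}$ be the set of $(q+1)$-th roots of unity in $\mathrm{GF}(q^2)$; coordinates of vectors of length $q+1$ are indexed by $U_{q+1}$ (in a fixed order). Define the code over $\mathrm{GF}(q^2)$ $\mathcal C_{\{3,5\}}=\{(a_3u^3+a_{q-2}u^{q-2}+a_5u^5+a_{q-4}u^{q-4})_{u\in U_{q+1}}: a_3,a_{q-2},a_5,a_{q-4}\in\mathrm{GF}(q^2)\}$. $\mathcal C_{\{3,5\}}^\perp$ is its dual with respect to the standard inner product $\sum_u c_uw_u$, and $\mathcal C^\perp_{\{3,5\}}|_{\mathrm{GF}(q)}=\mathcal C^\perp_{\{3,5\}}\cap\mathrm{GF}(q)^{q+1}$. $[n,k,d]_q$ denotes a linear code over $\mathrm{GF}(q)$ of length $n$, dimension $k$, minimum distance $d$. *)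

theory Defs
  imports Main
begin

text \<open>The ambient field 'a plays the role of GF(q^2); vectors of length q+1 are
functions 'a => 'a indexed by the (q+1)-th roots of unity, and zero outside.\<close>

definition roots_unity :: "nat \<Rightarrow> 'a::field set" where
  "roots_unity q = {u. u ^ (q + 1) = 1}"

definition subfield_q :: "nat \<Rightarrow> 'a::field set" where
  "subfield_q q = {x. x ^ q = x}"

definition vectors_on :: "'i set \<Rightarrow> ('i \<Rightarrow> 'a::zero) set" where
  "vectors_on I = {c. \<forall>i. i \<notin> I \<longrightarrow> c i = 0}"

definition code_C35 :: "nat \<Rightarrow> ('a::field \<Rightarrow> 'a) set" where
  "code_C35 q = {c. \<exists>a3 aq2 a5 aq4.
      c = (\<lambda>u. if u \<in> roots_unity q
                then a3 * u ^ 3 + aq2 * u ^ (q - 2) + a5 * u ^ 5 + aq4 * u ^ (q - 4)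
                else 0)}"

definition dual_code :: "'i set \<Rightarrow> ('i \<Rightarrow> 'a::field) set \<Rightarrow> ('i \<Rightarrow> 'a) set" where
  "dual_code I C = {w \<in> vectors_on I. \<forall>c\<in>C. (\<Sum>u\<in>I. c u * w u) = 0}"

definition subfield_subcode :: "'i set \<Rightarrow> 'a set \<Rightarrow> ('i \<Rightarrow> 'a::field) set \<Rightarrow> ('i \<Rightarrow> 'a) set" where
  "subfield_subcode I F C = {w \<in> C. \<forall>u\<in>I. w u \<in> F}"

definition hamming_dist :: "'i set \<Rightarrow> ('i \<Rightarrow> 'a) \<Rightarrow> ('i \<Rightarrow> 'a) \<Rightarrow> nat" where
  "hamming_dist I x y = card {i \<in> I. x i \<noteq> y i}"

definition min_distance :: "'i set \<Rightarrow> ('i \<Rightarrow> 'a) set \<Rightarrow> nat" where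
  "min_distance I C = Min {hamming_dist I x y | x y. x \<in> C \<and> y \<in> C \<and> x \<noteq> y}"

definition linear_code_params ::
  "'i set \<Rightarrow> 'a::field set \<Rightarrow> ('i \<Rightarrow> 'a) set \<Rightarrow> nat \<Rightarrow> nat \<Rightarrow> nat \<Rightarrow> bool" where
  "linear_code_params I F C n k d \<longleftrightarrow>
     finite I \<and> C \<subseteq> vectors_on I \<and> (\<forall>c\<in>C. \<forall>i\<in>I. c i \<in> F) \<and>
     (\<lambda>_. 0) \<in> C \<and> (\<forall>x\<in>C. \<forall>y\<in>C. (\<lambda>i. x i + y i) \<in> C) \<and>
     (\<forall>a\<in>F. \<forall>x\<in>C. (\<lambda>i. a * x i) \<in> C) \<and>
     n = card I \<and> card C = card F ^ k \<and> d = min_distance I C"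

end

theory Submission imports Defs "HOL-Computational_Algebra.Polynomial" "HOL-Library.FuncSet" begin


lemma fermat_aux:
  fixes x :: "'a::{field,finite}"
  assumes "x \<noteq> 0"
  shows "x ^ (card (UNIV::'a set) - 1) = 1"
proof -
  let ?N = "UNIV - {0::'a}"
  have bij: "bij_betw (\<lambda>y. x * y) ?N ?N"
    by (rule bij_betwI[where g="\<lambda>y. y / x"]) (use assms in auto)
  have "prod (\<lambda>y. x * y) ?N = prod id ?N"
    using prod.reindex_bij_betw[OF bij, of id] by simp
  moreover have "prod (\<lambda>y. x * y) ?N = x ^ card ?N * prod id ?N"
    by (simp add: prod.distrib)
  moreover have "prod id ?N \<noteq> 0" by simp
  ultimately have "x ^ card ?N = 1" by simp
  moreover have "card ?N = card (UNIV::'a set) - 1" by (simp add: card_Diff_singleton)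
  ultimately show ?thesis by simp
qed

lemma pow_card_aux:
  fixes x :: "'a::{field,finite}"
  shows "x ^ card (UNIV::'a set) = x"
proof (cases "x = 0")
  case True then show ?thesis by (simp add: finite_UNIV_card_ge_0)
next
  case False
  have "card (UNIV::'a set) = Suc (card (UNIV::'a set) - 1)" by (simp add: Suc_diff_Suc finite_UNIV_card_ge_0 finite_UNIV)
  then have "x ^ card (UNIV::'a set) = x * x ^ (card (UNIV::'a set) - 1)" by (metis power_Suc)
  then show ?thesis using fermat_aux[OF False] by simp
qed

lemma roots_card_bound:
  fixes c :: "'a::field"
  assumes "n \<ge> 1"
  shows "card {x. x ^ n = c} \<le> n"
proof -
  define p where "p = monom (1::'a) n - [:c:]"
  have cp: "coeff p n = 1" using assms by (simp add: p_def coeff_monom coeff_pCons split: nat.splits)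
  then have "p \<noteq> 0" by auto
  have "degree p \<le> n" unfolding p_def
    by (metis degree_diff_le degree_monom_le degree_pCons_0 le0)
  have "{x. x ^ n = c} = {x. poly p x = 0}" by (auto simp: p_def poly_monom)
  then show ?thesis using card_poly_roots_bound[OF \<open>p \<noteq> 0\<close>] \<open>degree p \<le> n\<close> by simp
qed



locale cset =
  fixes q :: nat and m :: nat and U :: "'a::{field,finite} set"
  assumes U_def: "U = roots_unity q" and m4: "m \<ge> 4" and ev: "even m" and qdef: "q = 2 ^ m"
    and cardA: "card (UNIV :: 'a set) = q ^ 2"
begin

abbreviation F where "F \<equiv> (subfield_q q :: 'a set)"

lemma q16: "q \<ge> 16"
proof -
  have "(2::nat)^4 \<le> 2^m" using m4 by (rule power_increasing) simp
  then show ?thesis using qdef by simp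
qed

lemma q_even: "even q" using qdef m4 by simp

lemma two0: "(2::'a) = 0"
proof -
  have "odd (q^2 - 1)" using q_even q16 by (simp add: power2_eq_square)
  then have "(-1::'a) ^ (q^2 - 1) = -1" by simp
  moreover have "(-1::'a) ^ (q^2 - 1) = 1" using fermat_aux[of "-1::'a"] cardA by simp
  ultimately have "(-1::'a) = 1" by simp
  then show ?thesis by (metis add.inverse_inverse one_add_one neg_eq_iff_add_eq_0)
qed

lemma neg_self[simp]: "- (x::'a) = x"
proof -
  have "x + x = 2 * x" by simp
  then have "x + x = 0" using two0 by simp
  then show ?thesis by (metis add_eq_0_iff)
qed

lemma minus_plus: "(x::'a) - y = x + y"
  by (metis diff_minus_eq_add neg_self)

lemma add_self[simp]: "(x::'a) + x = 0"
  by (metis minus_plus right_minus_eq)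

lemma add_eq0_iff: "(x::'a) + y = 0 \<longleftrightarrow> x = y"
  by (metis minus_plus right_minus_eq)

lemma sq_add: "((x::'a) + y)^2 = x^2 + y^2"
proof -
  have "(x+y)^2 = x^2 + y^2 + 2*(x*y)" by (simp add: power2_eq_square algebra_simps)
  then show ?thesis using two0 by simp
qed

lemma frob2: "((x::'a) + y)^(2^k) = x^(2^k) + y^(2^k)"
proof (induction k)
  case 0 then show ?case by simp
next
  case (Suc k)
  have "(x+y)^(2^Suc k) = ((x+y)^(2^k))^2" by (simp add: power_mult[symmetric] mult.commute)
  also have "\<dots> = (x^(2^k))^2 + (y^(2^k))^2" using Suc sq_add by simp
  also have "\<dots> = x^(2^Suc k) + y^(2^Suc k)" by (simp add: power_mult[symmetric] mult.commute)
  finally show ?case .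
qed

lemma frob: "((x::'a) + y)^q = x^q + y^q" using frob2 qdef by simp

lemma q_pos: "q > 0" using q16 by simp

lemma frob_sum: "finite A \<Longrightarrow> (\<Sum>i\<in>A. f i :: 'a)^q = (\<Sum>i\<in>A. (f i)^q)"
  by (induction A rule: finite_induct) (use q_pos frob in auto)

lemma pow_qq: "(x::'a) ^ (q*q) = x"
  using pow_card_aux[of x] cardA by (simp add: power2_eq_square)

lemma fermat: "(x::'a) \<noteq> 0 \<Longrightarrow> x ^ (q*q - 1) = 1"
  using fermat_aux[of x] cardA by (simp add: power2_eq_square)

lemma F_iff: "x \<in> F \<longleftrightarrow> x ^ q = x" by (simp add: subfield_q_def)

lemma F_0: "0 \<in> F" using q_pos by (simp add: F_iff)
lemma F_1: "1 \<in> F" by (simp add: F_iff)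
lemma F_add: "x \<in> F \<Longrightarrow> y \<in> F \<Longrightarrow> x + y \<in> F" by (simp add: F_iff frob)
lemma F_mult: "x \<in> F \<Longrightarrow> y \<in> F \<Longrightarrow> x * y \<in> F" by (simp add: F_iff power_mult_distrib)
lemma F_div: "x \<in> F \<Longrightarrow> y \<in> F \<Longrightarrow> x / y \<in> F" by (simp add: F_iff power_divide)
lemma F_tr: "x + x ^ q \<in> F" by (simp add: F_iff frob power_mult[symmetric] pow_qq add.commute)

lemma qq1: "q*q - 1 = (q-1)*(q+1)" "q*q - 1 = (q+1)*(q-1)"
  using q_pos by (cases q; simp add: algebra_simps)+

lemma card_F: "card F = q"
proof -
  have sub: "F - {0} = {x. x ^ (q-1) = 1}"
  proof (intro set_eqI iffI)
    fix x assume "x \<in> F - {0}"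
    then have "x ^ q = x" "x \<noteq> 0" by (auto simp: F_iff)
    moreover have "x ^ q = x * x ^ (q-1)" using q_pos by (metis Suc_diff_1 power_Suc)
    ultimately show "x \<in> {x. x ^ (q-1) = 1}" by simp
  next
    fix x assume "x \<in> {x. x ^ (q-1) = (1::'a)}"
    then have "x ^ (q-1) = 1" by simp
    moreover have "x ^ q = x * x ^ (q-1)" using q_pos by (metis Suc_diff_1 power_Suc)
    ultimately show "x \<in> F - {0}" using q16 by (auto simp: F_iff power_0_left)
  qed
  have le: "card (F - {0}) \<le> q - 1" unfolding sub using q16 by (intro roots_card_bound) simp
  have "UNIV - {0} \<subseteq> (\<Union>c\<in>F - {0}. {x::'a. x ^ (q+1) = c})"
  proof
    fix x :: 'a assume "x \<in> UNIV - {0}"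
    then have "x \<noteq> 0" by simp
    have "(x^(q+1))^q = x^((q+1)*q)" by (simp only: power_mult)
    also have "(q+1)*q = q*q + q" by simp
    also have "x^(q*q + q) = x^(q*q) * x^q" by (simp only: power_add)
    also have "\<dots> = x^(q+1)" by (simp add: pow_qq)
    finally have "x^(q+1) \<in> F - {0}" using \<open>x \<noteq> 0\<close> by (simp add: F_iff)
    then show "x \<in> (\<Union>c\<in>F - {0}. {x::'a. x ^ (q+1) = c})" by blast
  qed
  then have "card (UNIV - {0::'a}) \<le> card (\<Union>c\<in>F - {0}. {x::'a. x ^ (q+1) = c})"
    by (intro card_mono) auto
  also have "\<dots> \<le> (\<Sum>c\<in>F - {0}. card {x::'a. x ^ (q+1) = c})" by (rule card_UN_le) simp
  also have "\<dots> \<le> (\<Sum>c\<in>F - {0}. q+1)" by (intro sum_mono roots_card_bound) simp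
  finally have "q*q - 1 \<le> card (F - {0}) * (q+1)"
    using cardA by (simp add: card_Diff_singleton power2_eq_square)
  then have "(q-1)*(q+1) \<le> card (F - {0}) * (q+1)" by (simp only: qq1)
  then have "q - 1 \<le> card (F - {0})" by (rule mult_right_le_imp_le) simp
  with le have "card (F - {0}) = q - 1" by simp
  moreover have "card F > 0" using F_0 by (auto simp: card_gt_0_iff)
  ultimately show ?thesis using F_0 q_pos by (simp add: card_Diff_singleton)
qed

lemma U_iff: "u \<in> U \<longleftrightarrow> u ^ (q+1) = 1" by (simp add: U_def roots_unity_def)

lemma U_nz: "u \<in> U \<Longrightarrow> u \<noteq> 0" by (auto simp: U_iff)

lemma U_mod: "u \<in> U \<Longrightarrow> u ^ k = u ^ (k mod (q+1))"
proof -
  assume "u \<in> U"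
  then have "u^(q+1) = 1" by (simp add: U_iff)
  have "k = (q+1) * (k div (q+1)) + k mod (q+1)" by (metis div_mult_mod_eq mult.commute)
  then have "u^k = (u^(q+1))^(k div (q+1)) * u^(k mod (q+1))"
    by (metis power_add power_mult)
  then show ?thesis using \<open>u^(q+1) = 1\<close> by simp
qed

lemma card_U: "card U = q + 1"
proof -
  have le: "card U \<le> q + 1" unfolding U_iff U_def roots_unity_def by (intro roots_card_bound) simp
  have "UNIV - {0} \<subseteq> (\<Union>c\<in>U. {x::'a. x ^ (q-1) = c})"
  proof
    fix x :: 'a assume "x \<in> UNIV - {0}"
    then have "x \<noteq> 0" by simp
    have "(x^(q-1))^(q+1) = x^((q-1)*(q+1))" by (simp only: power_mult)
    also have "(q-1)*(q+1) = q*q-1" by (rule qq1(1)[symmetric])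
    finally have "(x^(q-1))^(q+1) = x^(q*q-1)" .
    then have "x^(q-1) \<in> U" using fermat[OF \<open>x \<noteq> 0\<close>] by (simp add: U_iff)
    then show "x \<in> (\<Union>c\<in>U. {x::'a. x ^ (q-1) = c})" by blast
  qed
  then have "card (UNIV - {0::'a}) \<le> card (\<Union>c\<in>U. {x::'a. x ^ (q-1) = c})"
    by (intro card_mono) auto
  also have "\<dots> \<le> (\<Sum>c\<in>U. card {x::'a. x ^ (q-1) = c})" by (rule card_UN_le) simp
  also have "\<dots> \<le> (\<Sum>c\<in>U. q-1)" using q16 by (intro sum_mono roots_card_bound) simp
  finally have "q*q - 1 \<le> card U * (q-1)"
    using cardA by (simp add: card_Diff_singleton power2_eq_square)
  then have "(q+1)*(q-1) \<le> card U * (q-1)" by (simp only: qq1(2))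
  moreover have "0 < q - 1" using q16 by simp
  ultimately have "q + 1 \<le> card U" by (rule mult_right_le_imp_le)
  with le show ?thesis by simp
qed

lemma of_nat_q: "(of_nat q :: 'a) = 0"
proof -
  obtain k where "q = 2 * k" using q_even by blast
  then show ?thesis using two0 by simp
qed

lemma U_mult: "u \<in> U \<Longrightarrow> v \<in> U \<Longrightarrow> u * v \<in> U"
  unfolding U_iff by (simp only: power_mult_distrib) simp

lemma U_inverse: "u \<in> U \<Longrightarrow> inverse u \<in> U"
  unfolding U_iff by (simp only: power_inverse) simp

lemma psum0: "0 < k \<Longrightarrow> k < q + 1 \<Longrightarrow> (\<Sum>u\<in>U. u ^ k) = 0"
proof -
  assume k: "0 < k" "k < q + 1"
  have "\<not> U \<subseteq> {x. x ^ k = 1}"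
  proof
    assume "U \<subseteq> {x. x ^ k = 1}"
    then have "card U \<le> card {x::'a. x ^ k = 1}" by (intro card_mono) auto
    also have "\<dots> \<le> k" using k by (intro roots_card_bound) simp
    finally show False using card_U k by simp
  qed
  then obtain g where g: "g \<in> U" "g ^ k \<noteq> 1" by blast
  have bij: "bij_betw (\<lambda>u. g * u) U U"
  proof (rule bij_betwI[where g="\<lambda>u. u / g"])
    show "(\<lambda>u. g * u) \<in> U \<rightarrow> U" using g U_mult by auto
    show "(\<lambda>u. u / g) \<in> U \<rightarrow> U" using g U_mult U_inverse by (auto simp: divide_inverse)
  qed (use g U_nz in auto)
  have "(\<Sum>u\<in>U. u ^ k) = (\<Sum>u\<in>U. (g * u) ^ k)"
    using sum.reindex_bij_betw[OF bij, of "\<lambda>u. u ^ k"] by simp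
  also have "\<dots> = g ^ k * (\<Sum>u\<in>U. u ^ k)" by (simp add: power_mult_distrib sum_distrib_left)
  finally have "(1 - g^k) * (\<Sum>u\<in>U. u ^ k) = 0" by (simp add: algebra_simps)
  then show ?thesis using g by simp
qed

lemma psum: "(\<Sum>u\<in>U. u ^ k) = (if (q+1) dvd k then 1 else 0)"
proof -
  have "(\<Sum>u\<in>U. u ^ k) = (\<Sum>u\<in>U. u ^ (k mod (q+1)))" by (intro sum.cong refl) (erule U_mod)
  also have "\<dots> = (if (q+1) dvd k then 1 else 0)"
  proof (cases "(q+1) dvd k")
    case True
    then have "(\<Sum>u\<in>U. u ^ (k mod (q+1))) = of_nat (card U)" by simp
    also have "\<dots> = 1" using card_U of_nat_q by simp
    finally show ?thesis using True by simp
  next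
    case False
    then have "0 < k mod (q+1)" by (simp add: dvd_eq_mod_eq_0)
    then show ?thesis using False psum0[of "k mod (q+1)"] by simp
  qed
  finally show ?thesis .
qed

end


lemma modI: "r < (n::nat) \<Longrightarrow> a = n*k + r \<Longrightarrow> a mod n = r" by simp

context cset begin

definition S :: "nat \<Rightarrow> ('a \<Rightarrow> 'a) \<Rightarrow> 'a" where
  "S k w = (\<Sum>u\<in>U. w u * u ^ k)"

definition V :: "('a \<Rightarrow> 'a) set" where
  "V = {w. w \<in> vectors_on U \<and> (\<forall>u\<in>U. w u \<in> F)}"

abbreviation C where "C \<equiv> subfield_subcode U F (dual_code U (code_C35 q))"

lemma q_split: obtains p where "q = p + 16" using q16 by (metis le_add_diff_inverse2)

lemma mod3: "(3*q) mod (q+1) = q - 2"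
  by (rule q_split, rule modI[where k=2]) simp_all
lemma mod5: "(5*q) mod (q+1) = q - 4"
  by (rule q_split, rule modI[where k=4]) simp_all
lemma modq2: "((q-2)*q) mod (q+1) = 3"
proof (rule q_split)
  fix p assume "q = p + 16"
  then show ?thesis by (intro modI[where k="q-3"]) (simp_all add: algebra_simps)
qed
lemma modq4: "((q-4)*q) mod (q+1) = 5"
proof (rule q_split)
  fix p assume "q = p + 16"
  then show ?thesis by (intro modI[where k="q-5"]) (simp_all add: algebra_simps)
qed

lemma S_conj:
  assumes "\<forall>u\<in>U. w u \<in> F"
  shows "(S k w)^q = S ((k*q) mod (q+1)) w"
proof -
  have "(S k w)^q = (\<Sum>u\<in>U. (w u * u ^ k)^q)" unfolding S_def by (simp add: frob_sum)
  also have "\<dots> = (\<Sum>u\<in>U. w u * u ^ ((k*q) mod (q+1)))"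
  proof (intro sum.cong refl)
    fix u assume u: "u \<in> U"
    have "(w u * u ^ k)^q = (w u)^q * u ^ (k*q)" by (simp add: power_mult_distrib power_mult)
    also have "\<dots> = w u * u ^ ((k*q) mod (q+1))" using assms u U_mod[OF u, of "k*q"] by (simp add: F_iff)
    finally show "(w u * u ^ k)^q = w u * u ^ ((k*q) mod (q+1))" .
  qed
  finally show ?thesis unfolding S_def .
qed

lemma S3_conj: "\<forall>u\<in>U. w u \<in> F \<Longrightarrow> (S 3 w)^q = S (q-2) w"
  using S_conj[of w 3] mod3 by simp
lemma S5_conj: "\<forall>u\<in>U. w u \<in> F \<Longrightarrow> (S 5 w)^q = S (q-4) w"
  using S_conj[of w 5] mod5 by simp

lemma dual_sum:
  "(\<Sum>u\<in>U. (if u \<in> U then a3 * u ^ 3 + aq2 * u ^ (q - 2) + a5 * u ^ 5 + aq4 * u ^ (q - 4) else 0) * w u)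
   = a3 * S 3 w + aq2 * S (q-2) w + a5 * S 5 w + aq4 * S (q-4) w"
proof -
  have "(\<Sum>u\<in>U. (if u \<in> U then a3 * u ^ 3 + aq2 * u ^ (q - 2) + a5 * u ^ 5 + aq4 * u ^ (q - 4) else 0) * w u)
     = (\<Sum>u\<in>U. a3 * (w u * u ^ 3) + aq2 * (w u * u ^ (q - 2)) + a5 * (w u * u ^ 5) + aq4 * (w u * u ^ (q - 4)))"
    by (intro sum.cong refl) (simp add: algebra_simps)
  also have "\<dots> = a3 * S 3 w + aq2 * S (q-2) w + a5 * S 5 w + aq4 * S (q-4) w"
    unfolding S_def by (simp add: sum.distrib sum_distrib_left)
  finally show ?thesis .
qed

lemma C_iff: "w \<in> C \<longleftrightarrow> w \<in> V \<and> S 3 w = 0 \<and> S 5 w = 0"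
proof
  assume w: "w \<in> C"
  then have vF: "w \<in> V" by (auto simp: subfield_subcode_def dual_code_def V_def)
  have all: "\<And>c. c \<in> code_C35 q \<Longrightarrow> (\<Sum>u\<in>U. c u * w u) = 0"
    using w by (auto simp: subfield_subcode_def dual_code_def)
  have "(\<Sum>u\<in>U. (if u \<in> U then 1 * u ^ 3 + 0 * u ^ (q - 2) + 0 * u ^ 5 + 0 * u ^ (q - 4) else 0) * w u) = 0"
    by (rule all) (unfold code_C35_def U_def, blast)
  then have s3: "S 3 w = 0" by (simp only: dual_sum) simp
  have "(\<Sum>u\<in>U. (if u \<in> U then 0 * u ^ 3 + 0 * u ^ (q - 2) + 1 * u ^ 5 + 0 * u ^ (q - 4) else 0) * w u) = 0"
    by (rule all) (unfold code_C35_def U_def, blast)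
  then have s5: "S 5 w = 0" by (simp only: dual_sum) simp
  show "w \<in> V \<and> S 3 w = 0 \<and> S 5 w = 0" using vF s3 s5 by simp
next
  assume h: "w \<in> V \<and> S 3 w = 0 \<and> S 5 w = 0"
  then have wF: "\<forall>u\<in>U. w u \<in> F" and wv: "w \<in> vectors_on U" by (auto simp: V_def)
  have q2: "S (q-2) w = 0" using S3_conj[OF wF] h q_pos by (simp add: power_0_left)
  have q4: "S (q-4) w = 0" using S5_conj[OF wF] h q_pos by (simp add: power_0_left)
  have "\<forall>c\<in>code_C35 q. (\<Sum>u\<in>U. c u * w u) = 0"
  proof
    fix c :: "'a \<Rightarrow> 'a" assume "c \<in> code_C35 q"
    then obtain a3 aq2 a5 aq4 where c: "c = (\<lambda>u. if u \<in> U then a3 * u ^ 3 + aq2 * u ^ (q - 2) + a5 * u ^ 5 + aq4 * u ^ (q - 4) else 0)"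
      unfolding code_C35_def U_def by blast
    show "(\<Sum>u\<in>U. c u * w u) = 0" unfolding c dual_sum using h q2 q4 by simp
  qed
  then show "w \<in> C" using wv wF by (simp add: subfield_subcode_def dual_code_def)
qed

end


lemma card_fibers_const:
  assumes "finite A" "\<And>y. y \<in> f ` A \<Longrightarrow> card {x\<in>A. f x = y} = k"
  shows "card A = card (f ` A) * k"
proof -
  have "A = (\<Union>y\<in>f ` A. {x\<in>A. f x = y})" by auto
  then have "card A = card (\<Union>y\<in>f ` A. {x\<in>A. f x = y})" by simp
  also have "\<dots> = (\<Sum>y\<in>f ` A. card {x\<in>A. f x = y})"
    by (rule card_UN_disjoint) (use assms(1) in auto)
  also have "\<dots> = (\<Sum>y\<in>f ` A. k)" using assms(2) by simp
  finally show ?thesis by simp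
qed

context cset begin

lemma card_V: "card V = q ^ (q+1)"
proof -
  let ?P = "PiE U (\<lambda>_. F)"
  let ?h = "\<lambda>f i. if i \<in> U then f i else (0::'a)"
  have inj: "inj_on ?h ?P"
  proof (rule inj_onI)
    fix f g assume f: "f \<in> ?P" and g: "g \<in> ?P" and e: "?h f = ?h g"
    show "f = g"
    proof (rule PiE_ext[OF f g])
      fix i assume "i \<in> U" then show "f i = g i" using fun_cong[OF e, of i] by simp
    qed
  qed
  have img: "?h ` ?P = V"
  proof (intro set_eqI iffI)
    fix w assume "w \<in> ?h ` ?P"
    then show "w \<in> V" by (auto simp: V_def vectors_on_def)
  next
    fix w assume w: "w \<in> V"
    have "restrict w U \<in> ?P" using w by (auto simp: V_def)
    moreover have "w = ?h (restrict w U)" using w by (auto simp: V_def vectors_on_def)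
    ultimately show "w \<in> ?h ` ?P" by blast
  qed
  have "card V = card ?P" using card_image[OF inj] img by simp
  also have "\<dots> = q ^ (q+1)" by (simp add: card_PiE card_F card_U)
  finally show ?thesis .
qed

lemma V_add: "x \<in> V \<Longrightarrow> y \<in> V \<Longrightarrow> (\<lambda>i. x i + y i) \<in> V"
  by (auto simp: V_def vectors_on_def F_add)

lemma V_scale: "a \<in> F \<Longrightarrow> x \<in> V \<Longrightarrow> (\<lambda>i. a * x i) \<in> V"
  by (auto simp: V_def vectors_on_def F_mult)

lemma S_add: "S k (\<lambda>i. x i + y i) = S k x + S k y"
  by (simp add: S_def sum.distrib algebra_simps)

lemma S_scale: "S k (\<lambda>i. a * x i) = a * S k x"
  by (simp add: S_def sum_distrib_left algebra_simps)

lemma surj: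
  "\<exists>w\<in>V. S 3 w = \<alpha> \<and> S 5 w = \<beta>"
proof -
  define w where "w = (\<lambda>u. if u \<in> U then \<alpha> * u^(q-2) + \<alpha>^q * u^3 + \<beta> * u^(q-4) + \<beta>^q * u^5 else 0)"
  have wF: "w u \<in> F" if u: "u \<in> U" for u
  proof -
    have p1: "(u^(q-2))^q = u^3"
      using U_mod[OF u, of "(q-2)*q"] modq2 by (simp add: power_mult[symmetric])
    have p2: "(u^(q-4))^q = u^5"
      using U_mod[OF u, of "(q-4)*q"] modq4 by (simp add: power_mult[symmetric])
    have "w u = (\<alpha> * u^(q-2) + (\<alpha> * u^(q-2))^q) + (\<beta> * u^(q-4) + (\<beta> * u^(q-4))^q)"
      using u by (simp add: w_def power_mult_distrib p1 p2 algebra_simps)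
    then show ?thesis by (simp add: F_add F_tr)
  qed
  have wV: "w \<in> V" using wF by (auto simp: V_def vectors_on_def w_def)
  have e1: "q - 2 + 3 = q + 1" "q - 4 + 3 = q - 1" "q - 2 + 5 = q + 3" "q - 4 + 5 = q + 1"
    using q16 by simp_all
  have "S 3 w = (\<Sum>u\<in>U. \<alpha> * u^(q+1) + \<alpha>^q * u^6 + \<beta> * u^(q-1) + \<beta>^q * u^8)"
    unfolding S_def
  proof (intro sum.cong refl)
    fix u assume "u \<in> U"
    then have wu: "w u = \<alpha> * u^(q-2) + \<alpha>^q * u^3 + \<beta> * u^(q-4) + \<beta>^q * u^5" by (simp add: w_def)
    have t: "u^(q-2)*u^3 = u^(q+1)" "u^3*u^3 = u^6" "u^(q-4)*u^3 = u^(q-1)" "u^5*u^3 = u^8"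
      by (simp_all only: power_add[symmetric] e1) simp_all
    show "w u * u ^ 3 = \<alpha> * u^(q+1) + \<alpha>^q * u^6 + \<beta> * u^(q-1) + \<beta>^q * u^8"
      by (simp only: wu distrib_right mult.assoc t)
  qed
  also have "\<dots> = \<alpha>"
  proof -
    have ps: "(\<Sum>u\<in>U. u^(q+1)) = 1" "(\<Sum>u\<in>U. u^6) = 0" "(\<Sum>u\<in>U. u^(q-1)) = 0" "(\<Sum>u\<in>U. u^8) = 0"
      using q16 by (simp_all only: psum) (auto dest: dvd_imp_le)
    show ?thesis by (simp only: sum.distrib sum_distrib_left[symmetric] ps) simp
  qed
  finally have s3: "S 3 w = \<alpha>" .
  have "S 5 w = (\<Sum>u\<in>U. \<alpha> * u^(q+3) + \<alpha>^q * u^8 + \<beta> * u^(q+1) + \<beta>^q * u^10)"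
    unfolding S_def
  proof (intro sum.cong refl)
    fix u assume "u \<in> U"
    then have wu: "w u = \<alpha> * u^(q-2) + \<alpha>^q * u^3 + \<beta> * u^(q-4) + \<beta>^q * u^5" by (simp add: w_def)
    have t: "u^(q-2)*u^5 = u^(q+3)" "u^3*u^5 = u^8" "u^(q-4)*u^5 = u^(q+1)" "u^5*u^5 = u^10"
      by (simp_all only: power_add[symmetric] e1) simp_all
    show "w u * u ^ 5 = \<alpha> * u^(q+3) + \<alpha>^q * u^8 + \<beta> * u^(q+1) + \<beta>^q * u^10"
      by (simp only: wu distrib_right mult.assoc t)
  qed
  also have "\<dots> = \<beta>"
  proof -
    have d: "\<not> (q+1) dvd (q+3)"
    proof
      assume "(q+1) dvd (q+3)"
      moreover have "q + 3 = (q+1) + 2" by simp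
      ultimately have "(q+1) dvd ((q+1) + 2)" by (simp only:)
      then have "(q+1) dvd 2" by (simp only: dvd_add_right_iff dvd_refl)
      then show False using q16 by (auto dest: dvd_imp_le)
    qed
    have ps: "(\<Sum>u\<in>U. u^(q+3)) = 0" "(\<Sum>u\<in>U. u^8) = 0" "(\<Sum>u\<in>U. u^(q+1)) = 1" "(\<Sum>u\<in>U. u^10) = 0"
      using q16 d by (simp_all only: psum) (auto dest: dvd_imp_le)
    show ?thesis by (simp only: sum.distrib sum_distrib_left[symmetric] ps) simp
  qed
  finally have s5: "S 5 w = \<beta>" .
  show ?thesis using wV s3 s5 by blast
qed

lemma card_C: "card C = q ^ (q - 3)"
proof -
  let ?f = "\<lambda>w. (S 3 w, S 5 w)"
  have img: "?f ` V = UNIV"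
  proof (intro set_eqI iffI)
    fix p :: "'a \<times> 'a"
    obtain w where "w \<in> V" "S 3 w = fst p" "S 5 w = snd p" using surj by blast
    then show "p \<in> ?f ` V" by (intro image_eqI[of _ _ w]) auto
  qed simp
  have Ceq: "C = {w\<in>V. ?f w = (0,0)}" using C_iff by auto
  have fib: "card {x\<in>V. ?f x = y} = card C" if y: "y \<in> ?f ` V" for y
  proof -
    obtain x0 where x0: "x0 \<in> V" "?f x0 = y" using y by blast
    have "bij_betw (\<lambda>z i. z i + x0 i) {x\<in>V. ?f x = (0,0)} {x\<in>V. ?f x = y}"
    proof (rule bij_betwI[where g="\<lambda>z i. z i + x0 i"])
      show "(\<lambda>z i. z i + x0 i) \<in> {x\<in>V. ?f x = (0,0)} \<rightarrow> {x\<in>V. ?f x = y}"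
        using x0 V_add by (auto simp: S_add)
      show "(\<lambda>z i. z i + x0 i) \<in> {x\<in>V. ?f x = y} \<rightarrow> {x\<in>V. ?f x = (0,0)}"
        using x0 V_add by (auto simp: S_add)
    qed (simp_all add: add.assoc)
    then show ?thesis using Ceq by (simp add: bij_betw_same_card)
  qed
  have "card V = card (?f ` V) * card C"
    by (rule card_fibers_const[OF _ fib]) simp_all
  moreover have "card (UNIV :: ('a \<times> 'a) set) = q^4"
    using cardA by (simp add: UNIV_Times_UNIV[symmetric] card_cartesian_product del: UNIV_Times_UNIV)
  ultimately have "q ^ (q+1) = q^4 * card C"
    using img card_V by simp
  moreover have "q ^ (q+1) = q^4 * q ^ (q - 3)" using q16 by (simp add: power_add[symmetric])
  ultimately show ?thesis using q_pos by simp
qed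

end


context cset begin

lemma pow4: "((a::'a) + b)^4 = a^4 + b^4"
  using frob2[of a b 2] by simp

lemma pow5: "((a::'a) + b)^5 = a^5 + a^4*b + a*b^4 + b^5"
proof -
  have "(a+b)^5 = (a+b)^4 * (a+b)" by (simp add: power_Suc2[symmetric])
  also have "\<dots> = (a^4 + b^4) * (a + b)" by (simp add: pow4)
  also have "\<dots> = a^5 + a^4*b + a*b^4 + b^5" by (simp add: algebra_simps eval_nat_numeral)
  finally show ?thesis .
qed

lemma four0: "(4::'a) = 0"
proof -
  have "(4::'a) = 2 * 2" by simp
  then show ?thesis using two0 by simp
qed

lemma three_pts:
  fixes va vb vc sa sb sc :: 'a
  assumes d: "sa \<noteq> sb" "sb \<noteq> sc" "sa \<noteq> sc"
    and h0: "va + vb + vc = 0" and h1: "va*sa + vb*sb + vc*sc = 0"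
    and h4: "va*sa^4 + vb*sb^4 + vc*sc^4 = 0" and h5: "va*sa^5 + vb*sb^5 + vc*sc^5 = 0"
  shows "va = 0 \<and> vb = 0 \<and> vc = 0"
proof -
  have vc: "vc = va + vb" using h0 by (metis add_eq0_iff)
  define x where "x = sa + sc"
  define y where "y = sb + sc"
  have x0: "x \<noteq> 0" using d by (simp add: x_def add_eq0_iff)
  have y0: "y \<noteq> 0" using d by (simp add: y_def add_eq0_iff)
  have "x + y = sa + sb + (sc + sc)" by (simp add: x_def y_def algebra_simps)
  then have xy: "x + y \<noteq> 0" using d by (simp add: add_eq0_iff)
  have "va*x + vb*y + 2*(vc*sc) = (va*sa + vb*sb + vc*sc) + sc*(va+vb+vc)"
    by (simp add: x_def y_def algebra_simps del: add_self neg_self)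
  then have "va*x + vb*y + 0*(vc*sc) = 0 + sc*0" by (simp only: h0 h1 two0)
  then have E1: "va*x + vb*y = 0" by simp
  have "va*(sa^5 + sa^4*sc + sa*sc^4 + sc^5) + vb*(sb^5 + sb^4*sc + sb*sc^4 + sc^5) + 4*vc*sc^5
     = (va*sa^5 + vb*sb^5 + vc*sc^5) + sc*(va*sa^4 + vb*sb^4 + vc*sc^4)
       + sc^4*(va*sa + vb*sb + vc*sc) + sc^5*(va+vb+vc)"
    by (simp add: algebra_simps eval_nat_numeral del: add_self neg_self)
  then have "va*(sa^5 + sa^4*sc + sa*sc^4 + sc^5) + vb*(sb^5 + sb^4*sc + sb*sc^4 + sc^5) + 0*vc*sc^5
     = 0 + sc*0 + sc^4*0 + sc^5*0" by (simp only: h0 h1 h4 h5 four0)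
  then have E5: "va*x^5 + vb*y^5 = 0" by (simp add: x_def y_def pow5)
  have vy: "vb*y = va*x" using E1 by (simp add: add_eq0_iff)
  have "y * (va*x^5 + vb*y^5) = va*x^5*y + (vb*y)*y^5" by (simp add: algebra_simps)
  also have "\<dots> = va*x*y*(x^4 + y^4)" by (simp add: vy algebra_simps power_Suc2[symmetric] power_Suc[symmetric])
  also have "\<dots> = va*x*y*(x+y)^4" by (simp add: pow4)
  finally have "va*x*y*(x+y)^4 = 0" using E5 by simp
  then have "va = 0" using x0 y0 xy by simp
  then show ?thesis using vy y0 vc by simp
qed

lemma sq_inj: "(a::'a)^2 = b^2 \<Longrightarrow> a = b"
proof -
  assume "a^2 = b^2"
  then have "(a+b)^2 = 0" by (simp add: sq_add)
  then show "a = b" by (simp add: add_eq0_iff)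
qed

lemma S_three:
  assumes w: "w \<in> V" and B: "{u\<in>U. w u \<noteq> 0} \<subseteq> {a,b,c}" "{a,b,c} \<subseteq> U"
    and d: "a \<noteq> b" "b \<noteq> c" "a \<noteq> c"
  shows "S k w = w a * a^k + w b * b^k + w c * c^k"
proof -
  have z: "\<forall>i\<in>U - {a,b,c}. w i * i^k = 0"
  proof
    fix i assume i: "i \<in> U - {a,b,c}"
    show "w i * i^k = 0"
    proof (cases "w i = 0")
      case False
      then have "i \<in> {u\<in>U. w u \<noteq> 0}" using i by simp
      then show ?thesis using B(1) i by blast
    qed simp
  qed
  have "S k w = (\<Sum>u\<in>{a,b,c}. w u * u^k)"
    unfolding S_def by (rule sum.mono_neutral_right[OF _ B(2) z]) simp
  then show ?thesis using d by simp
qed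

lemma pt_facts:
  assumes t: "t \<in> U"
  shows "t^(q-4) * t^2 = t^(q-2)" "t^(q-4) * (t^2)^4 = t^3" "t^(q-4) * (t^2)^5 = t^5"
proof -
  have e: "q - 4 + 2 = q - 2" "q - 4 + 8 = q + 4" "q - 4 + 10 = q + 6" using q16 by simp_all
  show "t^(q-4) * t^2 = t^(q-2)" by (simp only: power_add[symmetric] e)
  have m1: "(q+4) mod (q+1) = 3" by (rule modI[where k=1]) (use q16 in simp_all)
  have m2: "(q+6) mod (q+1) = 5" by (rule modI[where k=1]) (use q16 in simp_all)
  have "t^(q-4) * (t^2)^4 = t^(q+4)" by (simp only: power_mult[symmetric] power_add[symmetric]) (simp add: e)
  also have "\<dots> = t^3" using U_mod[OF t, of "q+4"] m1 by simp
  finally show "t^(q-4) * (t^2)^4 = t^3" .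
  have "t^(q-4) * (t^2)^5 = t^(q+6)" by (simp only: power_mult[symmetric] power_add[symmetric]) (simp add: e)
  also have "\<dots> = t^5" using U_mod[OF t, of "q+6"] m2 by simp
  finally show "t^(q-4) * (t^2)^5 = t^5" .
qed

lemma weight4:
  assumes wC: "w \<in> C" and wnz: "w \<noteq> (\<lambda>_. 0)"
  shows "4 \<le> card {u\<in>U. w u \<noteq> 0}"
proof (rule ccontr)
  assume "\<not> 4 \<le> card {u\<in>U. w u \<noteq> 0}"
  then have le3: "card {u\<in>U. w u \<noteq> 0} \<le> 3" by simp
  have wV: "w \<in> V" and sc: "S 3 w = 0" and s5: "S 5 w = 0" using wC C_iff by auto
  have wF: "\<forall>u\<in>U. w u \<in> F" using wV by (simp add: V_def)
  have sq2: "S (q-2) w = 0" using S3_conj[OF wF] sc q_pos by (simp add: power_0_left)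
  have sq4: "S (q-4) w = 0" using S5_conj[OF wF] s5 q_pos by (simp add: power_0_left)
  obtain B where B: "{u\<in>U. w u \<noteq> 0} \<subseteq> B" "B \<subseteq> U" "card B = 3"
    using exists_subset_between[OF le3, of U] card_U q16 by auto
  then obtain a b c where abc: "B = {a,b,c}" "a \<noteq> b" "b \<noteq> c" "a \<noteq> c" by (auto simp: card_3_iff)
  have inU: "a \<in> U" "b \<in> U" "c \<in> U" using B abc by auto
  note SS = S_three[OF wV B(1)[unfolded abc(1)] B(2)[unfolded abc(1)] abc(2-4)]
  let ?v = "\<lambda>t. w t * t^(q-4)"
  have r: "?v a = 0 \<and> ?v b = 0 \<and> ?v c = 0"
  proof (rule three_pts[where sa="a^2" and sb="b^2" and sc="c^2"])
    show "a^2 \<noteq> b^2" "b^2 \<noteq> c^2" "a^2 \<noteq> c^2" using abc sq_inj by blast+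
    show "?v a + ?v b + ?v c = 0" using sq4 SS by simp
    show "?v a * a^2 + ?v b * b^2 + ?v c * c^2 = 0"
      using sq2 SS pt_facts(1)[OF inU(1)] pt_facts(1)[OF inU(2)] pt_facts(1)[OF inU(3)]
      by (simp add: mult.assoc)
    show "?v a * (a^2)^4 + ?v b * (b^2)^4 + ?v c * (c^2)^4 = 0"
      using sc SS pt_facts(2)[OF inU(1)] pt_facts(2)[OF inU(2)] pt_facts(2)[OF inU(3)]
      by (simp add: mult.assoc)
    show "?v a * (a^2)^5 + ?v b * (b^2)^5 + ?v c * (c^2)^5 = 0"
      using s5 SS pt_facts(3)[OF inU(1)] pt_facts(3)[OF inU(2)] pt_facts(3)[OF inU(3)]
      by (simp add: mult.assoc)
  qed
  then have "w a = 0" "w b = 0" "w c = 0" using inU U_nz by auto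
  then have "{u\<in>U. w u \<noteq> 0} = {}" using B abc by auto
  moreover have "\<forall>u. u \<notin> U \<longrightarrow> w u = 0" using wV by (simp add: V_def vectors_on_def)
  ultimately have "w = (\<lambda>_. 0)" by auto
  then show False using wnz by simp
qed

end


context cset begin

definition tr :: "'a \<Rightarrow> 'a" where "tr a = a + inverse a"

lemma U_q: "u \<in> U \<Longrightarrow> u ^ q = inverse u"
proof -
  assume u: "u \<in> U"
  have "u * u^q = 1" using u by (simp add: U_iff)
  then show ?thesis using U_nz[OF u] by (simp add: field_simps)
qed

lemma F_pow: "x \<in> F \<Longrightarrow> x ^ n \<in> F"
proof -
  assume "x \<in> F"
  then have hx: "x ^ q = x" by (simp add: F_iff)
  have "(x^n)^q = x^(n*q)" by (rule power_mult[symmetric])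
  also have "\<dots> = x^(q*n)" by (simp only: mult.commute)
  also have "\<dots> = (x^q)^n" by (rule power_mult)
  finally show ?thesis using hx by (simp add: F_iff)
qed

lemma tr_F: "a \<in> U \<Longrightarrow> tr a \<in> F"
  using F_tr[of a] by (simp add: tr_def U_q)

lemma tr_ne0: "a \<in> U \<Longrightarrow> a \<noteq> 1 \<Longrightarrow> tr a \<noteq> 0"
proof
  assume a: "a \<in> U" "a \<noteq> 1" and "tr a = 0"
  then have "a = inverse a" by (simp add: tr_def add_eq0_iff)
  then have "a * a = 1" using U_nz[OF a(1)] by (metis right_inverse)
  then have "a^2 = 1^2" by (simp add: power2_eq_square)
  then have "a = 1" by (rule sq_inj)
  then show False using a by simp
qed

lemma q_mod3: "q mod 3 = 1"
proof -
  have "m = 2 * (m div 2)" using ev by simp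
  then have "q = 4 ^ (m div 2)" using qdef by (metis power_mult numeral_Bit0 power2_eq_square mult_2 numeral_One one_add_one)
  moreover have "(4::nat) ^ (m div 2) mod 3 = (4 mod 3) ^ (m div 2) mod 3" by (rule power_mod[symmetric])
  ultimately show ?thesis by simp
qed

lemma tr_ne1: "a \<in> U \<Longrightarrow> tr a \<noteq> 1"
proof
  assume a: "a \<in> U" and t: "tr a = 1"
  have a0: "a \<noteq> 0" using U_nz[OF a] .
  have "a * (a + inverse a) = a" using t by (simp add: tr_def)
  then have "a^2 + 1 = a" using a0 by (simp add: algebra_simps power2_eq_square)
  then have e: "a^2 + a + 1 = 0" by (metis add_eq0_iff add.commute add.left_commute)
  have "a^3 + 1 + 2 * (a^2 + a) = (a + 1) * (a^2 + a + 1)"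
    by (simp add: algebra_simps eval_nat_numeral del: add_self neg_self)
  then have "a^3 + 1 = 0" using e two0 by simp
  then have a3: "a^3 = 1" by (simp add: add_eq0_iff)
  have "q + 1 = 3 * ((q+1) div 3) + 2" using q_mod3 by presburger
  then have "a^(q+1) = (a^3)^((q+1) div 3) * a^2" by (metis power_add power_mult)
  then have "a^2 = 1" using a3 a by (simp add: U_iff)
  then have "a = 1" using sq_inj[of a 1] by simp
  then show False using e by simp
qed

lemma tr_eq: "a \<in> U \<Longrightarrow> b \<in> U \<Longrightarrow> tr a = tr b \<Longrightarrow> b = a \<or> b = inverse a"
proof -
  assume a: "a \<in> U" and b: "b \<in> U" and h: "tr a = tr b"
  have a0: "a \<noteq> 0" and b0: "b \<noteq> 0" using U_nz a b by auto
  have "(a + inverse a) * (a*b) = (b + inverse b) * (a*b)" using h by (simp add: tr_def)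
  moreover have "(a + inverse a) * (a*b) = a*a*b + b" using a0 by (simp add: field_simps)
  moreover have "(b + inverse b) * (a*b) = a*b*b + a" using b0 by (simp add: field_simps)
  ultimately have e: "a*a*b + b = a*b*b + a" by simp
  have "(a+b)*(a*b+1) = (a*a*b + b) + (a*b*b + a)"
    by (simp add: algebra_simps del: add_self neg_self)
  then have "(a+b)*(a*b+1) = 0" using e by simp
  then have "a = b \<or> a*b = 1" by (auto simp: add_eq0_iff)
  then show ?thesis using a0 by (auto simp: field_simps)
qed

lemma tr_inv: "tr (inverse a) = tr a" by (simp add: tr_def add.commute)

lemma A3: "a \<noteq> 0 \<Longrightarrow> a^3 + inverse a^3 = tr a^3 + tr a"
proof -
  assume a0: "a \<noteq> 0"
  have id: "(a + inverse a)^3 = a^3 + inverse a^3 + 3*(a*inverse a)*(a + inverse a)"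
    by (simp add: algebra_simps eval_nat_numeral del: add_self neg_self)
  have three: "(3::'a) = 1" using two0 by (metis add_0 numeral_Bit1 numeral_One one_add_one)
  have "tr a^3 = a^3 + inverse a^3 + tr a" using id a0 three by (simp add: tr_def)
  then have "tr a^3 + tr a = a^3 + inverse a^3 + (tr a + tr a)" using two0 by (simp add: algebra_simps)
  then show ?thesis by simp
qed

lemma A5: "a \<noteq> 0 \<Longrightarrow> a^5 + inverse a^5 = tr a^5 + tr a^3 + tr a"
proof -
  assume a0: "a \<noteq> 0"
  have id: "(a + inverse a)^5 = a^5 + inverse a^5 + 5*(a*inverse a)*(a^3 + inverse a^3)
             + 10*(a*inverse a)^2*(a + inverse a)"
    by (simp add: algebra_simps eval_nat_numeral del: add_self neg_self)
  have five: "(5::'a) = 1"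
  proof -
    have "(5::'a) = 2*2 + 1" by simp
    then show ?thesis using two0 by simp
  qed
  have ten: "(10::'a) = 0"
  proof -
    have "(10::'a) = 2*5" by simp
    then show ?thesis using two0 by simp
  qed
  have "tr a^5 = a^5 + inverse a^5 + (a^3 + inverse a^3)" using id a0 five ten by (simp add: tr_def)
  also have "\<dots> = a^5 + inverse a^5 + (tr a^3 + tr a)" using A3[OF a0] by simp
  finally have "tr a^5 + (tr a^3 + tr a) = a^5 + inverse a^5 + ((tr a^3 + tr a) + (tr a^3 + tr a))"
    using two0 by (simp add: algebra_simps)
  then show ?thesis by (simp add: add.assoc)
qed

lemma E_ident:
  fixes y z :: 'a
  assumes h: "y*z + y + z = 0"
  shows "(y^3+y)*(z^5+z^3+z) + (z^3+z)*(y^5+y^3+y) = 0"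
proof -
  have "(y^3+y)*(z^5+z^3+z) + (z^3+z)*(y^5+y^3+y)
      = y*z*(y+z)^2*(y*z+y+z)^2 + 2*(y*z + y*z^3 - 2*y^2*z^4 - y^2*z^5 + y^3*z - 2*y^3*z^3
          - 3*y^3*z^4 - 2*y^4*z^2 - 3*y^4*z^3 - y^4*z^4 - y^5*z^2)"
    by (simp add: algebra_simps eval_nat_numeral del: add_self neg_self)
  then show ?thesis using h two0 by simp
qed

end


context cset begin

lemma one_U: "1 \<in> U" by (simp add: U_iff)

lemma exists_pair: "\<exists>a\<in>U - {1}. \<exists>b\<in>U - {1}. tr b * tr a + tr b + tr a = 0"
proof -
  define I where "I = tr ` (U - {1})"
  define \<sigma> where "\<sigma> = (\<lambda>z::'a. z / (z + 1))"
  have IF: "I \<subseteq> F - {0,1}" using tr_F tr_ne0 tr_ne1 by (auto simp: I_def)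
  have fib: "card {a\<in>U - {1}. tr a = z} \<le> 2" if z: "z \<in> I" for z
  proof -
    obtain a0 where a0: "a0 \<in> U - {1}" "tr a0 = z" using z by (auto simp: I_def)
    have "{a\<in>U - {1}. tr a = z} \<subseteq> {a0, inverse a0}"
    proof
      fix x assume "x \<in> {a\<in>U - {1}. tr a = z}"
      then have "x \<in> U" "tr a0 = tr x" using a0 by auto
      then show "x \<in> {a0, inverse a0}" using tr_eq[of a0 x] a0 by auto
    qed
    then have "card {a\<in>U - {1}. tr a = z} \<le> card {a0, inverse a0}" by (intro card_mono) auto
    also have "\<dots> \<le> 2" by (simp add: card_insert_if)
    finally show ?thesis .
  qed
  have "U - {1} \<subseteq> (\<Union>z\<in>I. {a\<in>U - {1}. tr a = z})" by (auto simp: I_def)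
  then have "card (U - {1}) \<le> card (\<Union>z\<in>I. {a\<in>U - {1}. tr a = z})" by (intro card_mono) auto
  also have "\<dots> \<le> (\<Sum>z\<in>I. card {a\<in>U - {1}. tr a = z})" by (rule card_UN_le) simp
  also have "\<dots> \<le> (\<Sum>z\<in>I. 2)" using fib by (intro sum_mono) auto
  finally have qI: "q \<le> 2 * card I" using card_U one_U by (simp add: card_Diff_singleton)
  have sF: "\<sigma> z \<in> F - {0,1}" if "z \<in> F - {0,1}" for z
  proof -
    have z: "z \<in> F" "z \<noteq> 0" "z \<noteq> 1" using that by auto
    have z1: "z + 1 \<noteq> 0" using z by (simp add: add_eq0_iff)
    have "\<sigma> z \<in> F" using z F_add F_1 F_div by (simp add: \<sigma>_def)
    moreover have "\<sigma> z \<noteq> 0" using z z1 by (simp add: \<sigma>_def)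
    moreover have "\<sigma> z \<noteq> 1"
    proof
      assume "\<sigma> z = 1"
      then have "z = z + 1" using z1 by (simp add: \<sigma>_def field_simps)
      then show False by simp
    qed
    ultimately show ?thesis by simp
  qed
  have sinj: "inj_on \<sigma> (F - {0,1})"
  proof (rule inj_onI)
    fix x y assume x: "x \<in> F - {0,1}" and y: "y \<in> F - {0,1}" and e: "\<sigma> x = \<sigma> y"
    have x1: "x + 1 \<noteq> 0" using x by (simp add: add_eq0_iff)
    have y1: "y + 1 \<noteq> 0" using y by (simp add: add_eq0_iff)
    have "x * (y + 1) = y * (x + 1)" using e x1 y1 by (simp add: \<sigma>_def field_simps)
    then show "x = y" by (simp add: algebra_simps)
  qed
  have "I \<inter> \<sigma> ` I \<noteq> {}"
  proof
    assume disj: "I \<inter> \<sigma> ` I = {}"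
    have "I \<union> \<sigma> ` I \<subseteq> F - {0,1}" using IF sF by auto
    then have "card (I \<union> \<sigma> ` I) \<le> card (F - {0,1})" by (intro card_mono) auto
    moreover have "card (I \<union> \<sigma> ` I) = card I + card (\<sigma> ` I)"
      using disj by (intro card_Un_disjoint) auto
    moreover have "card (\<sigma> ` I) = card I"
      using inj_on_subset[OF sinj IF] by (rule card_image)
    moreover have "card (F - {0,1}) = q - 2" using card_F F_0 F_1 by (simp add: card_Diff_subset)
    ultimately show False using qI q16 by simp
  qed
  then obtain z where zI: "z \<in> I" and szI: "\<sigma> z \<in> I" by blast
  obtain a where a: "a \<in> U - {1}" "tr a = z" using zI by (auto simp: I_def)
  obtain b where b: "b \<in> U - {1}" "tr b = \<sigma> z" using szI unfolding I_def by (metis imageE)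
  have z1: "z + 1 \<noteq> 0" using zI IF by (auto simp: add_eq0_iff)
  have "tr b * (z + 1) = z" using b z1 by (simp add: \<sigma>_def)
  then have "tr b * z + tr b = z" by (simp add: algebra_simps)
  then have "tr b * tr a + tr b + tr a = 0" using a by (simp add: add_eq0_iff)
  then show ?thesis using a b by blast
qed

lemma exists_w4: "\<exists>w\<in>C. w \<noteq> (\<lambda>_. 0) \<and> card {u\<in>U. w u \<noteq> 0} = 4"
proof -
  obtain a b where a: "a \<in> U - {1}" and b: "b \<in> U - {1}" and rel: "tr b * tr a + tr b + tr a = 0"
    using exists_pair by blast
  define z where "z = tr a"
  define y where "y = tr b"
  have rel': "y * z + y + z = 0" using rel by (simp add: y_def z_def)
  have aU: "a \<in> U" and bU: "b \<in> U" using a b by auto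
  have a0: "a \<noteq> 0" and b0: "b \<noteq> 0" using U_nz aU bU by auto
  have z0: "z \<noteq> 0" "z \<noteq> 1" using a tr_ne0 tr_ne1 by (auto simp: z_def)
  have y0: "y \<noteq> 0" "y \<noteq> 1" using b tr_ne0 tr_ne1 by (auto simp: y_def)
  have zF: "z \<in> F" and yF: "y \<in> F" using tr_F aU bU by (auto simp: z_def y_def)
  have yz: "y \<noteq> z"
  proof
    assume "y = z"
    then have "z * z + (z + z) = 0" using rel' by (simp add: add.assoc)
    then have "z * z = 0" by simp
    then show False using z0 by simp
  qed
  define a' where "a' = inverse a"
  define b' where "b' = inverse b"
  have a'U: "a' \<in> U" and b'U: "b' \<in> U" using U_inverse aU bU by (auto simp: a'_def b'_def)
  have tra': "tr a' = z" and trb': "tr b' = y" by (simp_all add: a'_def b'_def z_def y_def tr_inv)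
  have daa: "a \<noteq> a'"
  proof
    assume "a = a'"
    then have "z = a + a" by (simp add: z_def tr_def a'_def)
    then show False using z0 by simp
  qed
  have dbb: "b \<noteq> b'"
  proof
    assume "b = b'"
    then have "y = b + b" by (simp add: y_def tr_def b'_def)
    then show False using y0 by simp
  qed
  have dab: "a \<noteq> b" "a \<noteq> b'" "a' \<noteq> b" "a' \<noteq> b'"
    using yz tra' trb' by (auto simp: z_def y_def)
  define A3 where "A3 = z^3 + z"
  define B3 where "B3 = y^3 + y"
  have A3': "a^3 + a'^3 = A3" using A3[OF a0] by (simp add: A3_def z_def a'_def)
  have B3': "b^3 + b'^3 = B3" using A3[OF b0] by (simp add: B3_def y_def b'_def)
  have A5': "a^5 + a'^5 = z^5 + z^3 + z" using A5[OF a0] by (simp add: z_def a'_def)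
  have B5': "b^5 + b'^5 = y^5 + y^3 + y" using A5[OF b0] by (simp add: y_def b'_def)
  have A3nz: "A3 \<noteq> 0"
  proof -
    have "A3 = z * (z + 1)^2" using two0 by (simp add: A3_def sq_add algebra_simps power2_eq_square power3_eq_cube)
    moreover have "z + 1 \<noteq> 0" using z0 by (simp add: add_eq0_iff)
    ultimately show ?thesis using z0 by simp
  qed
  have B3nz: "B3 \<noteq> 0"
  proof -
    have "B3 = y * (y + 1)^2" using two0 by (simp add: B3_def sq_add algebra_simps power2_eq_square power3_eq_cube)
    moreover have "y + 1 \<noteq> 0" using y0 by (simp add: add_eq0_iff)
    ultimately show ?thesis using y0 by simp
  qed
  have A3F: "A3 \<in> F" using zF by (simp add: A3_def F_add F_pow)
  have B3F: "B3 \<in> F" using yF by (simp add: B3_def F_add F_pow)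
  define w where "w = (\<lambda>u. if u = a \<or> u = a' then B3 else if u = b \<or> u = b' then A3 else 0)"
  have supp: "{u\<in>U. w u \<noteq> 0} = {a, a', b, b'}"
    using aU a'U bU b'U A3nz B3nz by (auto simp: w_def)
  have wV: "w \<in> V"
    using aU a'U bU b'U A3F B3F F_0 by (auto simp: V_def vectors_on_def w_def)
  have Sk: "S k w = B3 * (a^k + a'^k) + A3 * (b^k + b'^k)" for k
  proof -
    have z: "\<forall>i\<in>U - {a,a',b,b'}. w i * i^k = 0" by (auto simp: w_def)
    have "S k w = (\<Sum>u\<in>{a,a',b,b'}. w u * u^k)"
      unfolding S_def by (rule sum.mono_neutral_right[OF _ _ z]) (use aU a'U bU b'U in auto)
    also have "\<dots> = w a * a^k + w a' * a'^k + w b * b^k + w b' * b'^k"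
      using daa dbb dab by (simp add: algebra_simps)
    also have "\<dots> = B3 * (a^k + a'^k) + A3 * (b^k + b'^k)"
      using daa dbb dab by (simp add: w_def algebra_simps)
    finally show ?thesis .
  qed
  have "S 3 w = B3 * A3 + A3 * B3" using Sk[of 3] A3' B3' by simp
  then have s3: "S 3 w = 0" by (simp add: mult.commute)
  have "S 5 w = (y^3+y)*(z^5+z^3+z) + (z^3+z)*(y^5+y^3+y)"
    using Sk[of 5] A5' B5' by (simp add: A3_def B3_def)
  then have s5: "S 5 w = 0" using E_ident[OF rel'] by simp
  have "w \<in> C" using C_iff wV s3 s5 by simp
  moreover have "w \<noteq> (\<lambda>_. 0)"
  proof
    assume "w = (\<lambda>_. 0)"
    then have "w a = 0" by simp
    then show False using B3nz by (simp add: w_def)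
  qed
  moreover have "card {u\<in>U. w u \<noteq> 0} = 4" using supp daa dbb dab by simp
  ultimately show ?thesis by blast
qed

lemma C_zero: "(\<lambda>_. 0) \<in> C"
  using C_iff F_0 by (simp add: V_def vectors_on_def S_def)

lemma C_add: "x \<in> C \<Longrightarrow> y \<in> C \<Longrightarrow> (\<lambda>i. x i + y i) \<in> C"
  using C_iff V_add S_add by simp

lemma C_scale: "a \<in> F \<Longrightarrow> x \<in> C \<Longrightarrow> (\<lambda>i. a * x i) \<in> C"
  using C_iff V_scale S_scale by simp

lemma min_dist: "min_distance U C = 4"
proof -
  let ?D = "{hamming_dist U x y | x y. x \<in> C \<and> y \<in> C \<and> x \<noteq> y}"
  have fin: "finite ?D"
  proof (rule finite_subset)
    show "?D \<subseteq> {..card U}"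
      by (auto simp: hamming_dist_def intro!: card_mono)
  qed simp
  have ge: "4 \<le> d" if "d \<in> ?D" for d
  proof -
    obtain x y where xy: "x \<in> C" "y \<in> C" "x \<noteq> y" "d = hamming_dist U x y" using \<open>d \<in> ?D\<close> by blast
    let ?z = "\<lambda>i. x i + y i"
    have zC: "?z \<in> C" using C_add xy by simp
    have znz: "?z \<noteq> (\<lambda>_. 0)"
    proof
      assume "?z = (\<lambda>_. 0)"
      then have "\<forall>i. x i = y i" by (metis add_eq0_iff)
      then show False using xy by auto
    qed
    have "{i\<in>U. x i \<noteq> y i} = {u\<in>U. ?z u \<noteq> 0}" by (auto simp: add_eq0_iff)
    then have "d = card {u\<in>U. ?z u \<noteq> 0}" using xy by (simp add: hamming_dist_def)
    then show ?thesis using weight4[OF zC znz] by simp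
  qed
  obtain w where w: "w \<in> C" "w \<noteq> (\<lambda>_. 0)" "card {u\<in>U. w u \<noteq> 0} = 4" using exists_w4 by blast
  have "hamming_dist U w (\<lambda>_. 0) = 4" using w by (simp add: hamming_dist_def)
  then have "4 \<in> ?D" using w C_zero by force
  then show ?thesis unfolding min_distance_def by (intro Min_eqI[OF fin ge])
qed

lemma main: "linear_code_params U F C (q + 1) (q - 3) 4"
  unfolding linear_code_params_def
proof (intro conjI)
  show "finite U" by simp
  show "C \<subseteq> vectors_on U" using C_iff by (auto simp: V_def)
  show "\<forall>c\<in>C. \<forall>i\<in>U. c i \<in> F" using C_iff by (auto simp: V_def)
  show "(\<lambda>_. 0) \<in> C" by (rule C_zero)
  show "\<forall>x\<in>C. \<forall>y\<in>C. (\<lambda>i. x i + y i) \<in> C" using C_add by blast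
  show "\<forall>a\<in>F. \<forall>x\<in>C. (\<lambda>i. a * x i) \<in> C" using C_scale by blast
  show "q + 1 = card U" using card_U by simp
  show "card C = card F ^ (q - 3)" using card_C card_F by simp
  show "4 = min_distance U C" using min_dist by simp
qed

end

theorem theorem21:
  fixes m :: nat and q :: nat and U :: "'a::{field,finite} set"
  assumes U_def: "U = roots_unity q" and "m \<ge> 4" and "even m" and "q = 2 ^ m"
    and "card (UNIV :: 'a set) = q ^ 2"
  shows "linear_code_params U (subfield_q q)
           (subfield_subcode U (subfield_q q)
              (dual_code U (code_C35 q)))
           (q + 1) (q - 3) 4"
proof -
  interpret cset q m U using assms by unfold_locales
  show ?thesis by (rule main)
qed


end
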